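(* Let $n\ge2$ and let $\mathcal D$ be the $n$-adic filtration of $[0,1]$. Then every Haar function $h$ on an interval $I\in\mathcal D$ can be written as a sum $h=\sum_k h_k$ of at most $n$ elementary Haar functions $h_k$ on $I$, such that moreover $|h|=\sum_k|h_k|$ pointwise.
   Context: The $n$-adic filtration of $[0,1]$: $\mathcal D_0=\{[0,1]\}$ and each interval of $\mathcal D_k$ is split into $n$ consecutive subintervals of equal length (its children $\mathrm{ch}(I)$), forming $\mathcal D_{k+1}$; $\mathcal D=\bigcup_k\mathcal D_k$. A Haar function on $I\in\mathcal D$ is a function $h$ supported on $I$, constant on each child of $I$, with $\int_I h\,dx=0$. A Haar function on $I$ is elementary if it is nonzero on at most two children of $I$, i.e. it has the form $c(\mathbf 1_{I_{k_1}}-\mathbf 1_{I_{k_2}})$ with $I_{k_1},I_{k_2}\in\mathrm{ch}(I)$ and $c$ a constant. *)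

theory Defs
  imports "HOL-Analysis.Analysis"
begin

text \<open>The j-th interval of generation k of the n-adic filtration (j < n^k),
  taken half-open so that the children of an interval partition it.\<close>
definition nadic_int :: "nat \<Rightarrow> nat \<Rightarrow> nat \<Rightarrow> real set" where
  "nadic_int n k j = {real j / real n ^ k ..< real (Suc j) / real n ^ k}"

definition nadic_child :: "nat \<Rightarrow> nat \<Rightarrow> nat \<Rightarrow> nat \<Rightarrow> real set" where
  "nadic_child n k j i = nadic_int n (Suc k) (n * j + i)"

definition haar_on :: "nat \<Rightarrow> nat \<Rightarrow> nat \<Rightarrow> (real \<Rightarrow> real) \<Rightarrow> bool" where
  "haar_on n k j h \<longleftrightarrow>
     (\<forall>x. x \<notin> nadic_int n k j \<longrightarrow> h x = 0) \<and>
     (\<forall>i<n. \<exists>c. \<forall>x\<in>nadic_child n k j i. h x = c) \<and>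
     (h has_integral 0) (nadic_int n k j)"

definition elementary_haar_on :: "nat \<Rightarrow> nat \<Rightarrow> nat \<Rightarrow> (real \<Rightarrow> real) \<Rightarrow> bool" where
  "elementary_haar_on n k j h \<longleftrightarrow> haar_on n k j h \<and>
     (\<exists>i1<n. \<exists>i2<n. \<exists>c::real.
        h = (\<lambda>x. c * (indicator (nadic_child n k j i1) x - indicator (nadic_child n k j i2) x)))"

end

theory Submission imports Defs begin
lemma comb:
  fixes c :: "nat \<Rightarrow> real" and n :: nat
  assumes "(\<Sum>i<n. c i) = 0"
  shows "\<exists>m\<le>card {i. i<n \<and> c i \<noteq> 0}. \<exists>a p q. (\<forall>l<m. p l < n \<and> q l < n \<and> p l \<noteq> q l \<and> a l \<ge> (0::real)) \<and>
     (\<forall>i<n. c i = (\<Sum>l<m. a l * ((if p l = i then 1 else 0) - (if q l = i then 1 else 0))) \<and>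
             \<bar>c i\<bar> = (\<Sum>l<m. a l * ((if p l = i then 1 else 0) + (if q l = i then 1 else 0))))"
  using assms
proof (induction "card {i. i<n \<and> c i \<noteq> 0}" arbitrary: c rule: less_induct)
  case less
  show ?case
  proof (cases "\<forall>i<n. c i = 0")
    case True
    show ?thesis by (rule exI[of _ 0]) (use True in auto)
  next
    case False
    have "\<exists>p<n. c p > 0"
    proof (rule ccontr)
      assume "\<not> ?thesis"
      hence le: "\<forall>i<n. c i \<le> 0" by force
      from False obtain i where i: "i<n" "c i \<noteq> 0" by auto
      have "(\<Sum>i<n. c i) < (\<Sum>i<n. (0::real))"
      proof (rule sum_strict_mono_ex1)
        show "\<forall>x\<in>{..<n}. c x \<le> 0" using le by simp
        show "\<exists>x\<in>{..<n}. c x < 0" using le i by (intro bexI[of _ i]) (simp_all add: order.strict_iff_order)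
      qed simp
      with less.prems show False by simp
    qed
    then obtain p where p: "p<n" "c p > 0" by auto
    have "\<exists>q<n. c q < 0"
    proof (rule ccontr)
      assume "\<not> ?thesis"
      hence le: "\<forall>i<n. c i \<ge> 0" by force
      have "(\<Sum>i<n. (0::real)) < (\<Sum>i<n. c i)"
      proof (rule sum_strict_mono_ex1)
        show "\<forall>x\<in>{..<n}. 0 \<le> c x" using le by simp
        show "\<exists>x\<in>{..<n}. 0 < c x" using p by (intro bexI[of _ p]) simp_all
      qed simp
      with less.prems show False by simp
    qed
    then obtain q where q: "q<n" "c q < 0" by auto
    have pq: "p \<noteq> q" using p q by auto
    define a0 where "a0 = min (c p) (- c q)"
    have a0: "a0 > 0" using p q by (simp add: a0_def)
    define c' where "c' = c(p := c p - a0, q := c q + a0)"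
    have sum': "(\<Sum>i<n. c' i) = 0"
    proof -
      have "(\<Sum>i<n. c' i) = (\<Sum>i<n. c i + a0 * ((if q = i then 1 else 0) - (if p = i then 1 else 0)))"
        by (rule sum.cong) (use pq in \<open>auto simp: c'_def\<close>)
      also have "\<dots> = (\<Sum>i<n. c i)"
      proof -
        have "(\<Sum>i<n. a0 * ((if q = i then 1 else 0) - (if p = i then 1 else 0))) = a0 * ((\<Sum>i<n. (if q = i then 1 else 0)) - (\<Sum>i<n. (if p = i then 1 else 0)))"
          by (simp only: sum_subtractf[symmetric] sum_distrib_left right_diff_distrib)
        also have "\<dots> = 0" using p q by (simp add: sum.delta)
        finally show ?thesis by (simp only: sum.distrib)
      qed
      finally show ?thesis using less.prems by simp
    qed
    have sub: "{i. i<n \<and> c' i \<noteq> 0} \<subset> {i. i<n \<and> c i \<noteq> 0}"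
    proof
      have c'o: "c' i = c i" if "i \<noteq> p" "i \<noteq> q" for i using that by (simp add: c'_def)
      show "{i. i<n \<and> c' i \<noteq> 0} \<subseteq> {i. i<n \<and> c i \<noteq> 0}"
      proof
        fix i assume "i \<in> {i. i<n \<and> c' i \<noteq> 0}"
        hence i: "i < n" "c' i \<noteq> 0" by simp_all
        have "c i \<noteq> 0"
        proof (cases "i = p \<or> i = q")
          case True thus ?thesis using p q by auto
        next
          case False thus ?thesis using c'o i by auto
        qed
        thus "i \<in> {i. i<n \<and> c i \<noteq> 0}" using i by simp
      qed
      have cp: "c' p = c p - a0" and cq: "c' q = c q + a0" using pq by (simp_all add: c'_def)
      have "c' p = 0 \<or> c' q = 0" unfolding cp cq a0_def by linarith
      then show "{i. i<n \<and> c' i \<noteq> 0} \<noteq> {i. i<n \<and> c i \<noteq> 0}"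
      proof
        assume "c' p = 0" thus ?thesis using p by (metis (mono_tags, lifting) mem_Collect_eq order.irrefl)
      next
        assume "c' q = 0" thus ?thesis using q by (metis (mono_tags, lifting) mem_Collect_eq order.irrefl)
      qed
    qed
    hence card_lt: "card {i. i<n \<and> c' i \<noteq> 0} < card {i. i<n \<and> c i \<noteq> 0}"
      by (intro psubset_card_mono) auto
    from less.hyps[OF card_lt sum'] obtain m a p' q' where
      m: "m \<le> card {i. i<n \<and> c' i \<noteq> 0}" and
      A: "\<forall>l<m. p' l < n \<and> q' l < n \<and> p' l \<noteq> q' l \<and> a l \<ge> 0" and
      B: "\<forall>i<n. c' i = (\<Sum>l<m. a l * ((if p' l = i then 1 else 0) - (if q' l = i then 1 else 0))) \<and>
             \<bar>c' i\<bar> = (\<Sum>l<m. a l * ((if p' l = i then 1 else 0) + (if q' l = i then 1 else 0)))"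
      by blast
    define a2 where "a2 = a(m := a0)"
    define p2 where "p2 = p'(m := p)"
    define q2 where "q2 = q'(m := q)"
    have c'p: "c' p \<ge> 0" and c'q: "c' q \<le> 0" using pq by (simp_all add: c'_def a0_def)
    have G1: "Suc m \<le> card {i. i<n \<and> c i \<noteq> 0}" using m card_lt by simp
    have G2: "\<forall>l<Suc m. p2 l < n \<and> q2 l < n \<and> p2 l \<noteq> q2 l \<and> a2 l \<ge> 0"
    proof (intro allI impI)
      fix l assume "l < Suc m"
      then show "p2 l < n \<and> q2 l < n \<and> p2 l \<noteq> q2 l \<and> a2 l \<ge> 0"
        using A p q pq a0 by (cases "l = m") (simp_all add: a2_def p2_def q2_def)
    qed
    have G3: "\<forall>i<n. c i = (\<Sum>l<Suc m. a2 l * ((if p2 l = i then 1 else 0) - (if q2 l = i then 1 else 0))) \<and>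
             \<bar>c i\<bar> = (\<Sum>l<Suc m. a2 l * ((if p2 l = i then 1 else 0) + (if q2 l = i then 1 else 0)))"
    proof (intro allI impI conjI)
      fix i assume i: "i < n"
      have e1: "(\<Sum>l<m. a2 l * ((if p2 l = i then 1 else 0) - (if q2 l = i then 1 else 0)))
          = (\<Sum>l<m. a l * ((if p' l = i then 1 else 0) - (if q' l = i then 1 else 0)))"
        by (rule sum.cong) (auto simp: a2_def p2_def q2_def)
      have e2: "(\<Sum>l<m. a2 l * ((if p2 l = i then 1 else 0) + (if q2 l = i then 1 else 0)))
          = (\<Sum>l<m. a l * ((if p' l = i then 1 else 0) + (if q' l = i then 1 else 0)))"
        by (rule sum.cong) (auto simp: a2_def p2_def q2_def)
      have Bi: "c' i = (\<Sum>l<m. a l * ((if p' l = i then 1 else 0) - (if q' l = i then 1 else 0)))"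
        "\<bar>c' i\<bar> = (\<Sum>l<m. a l * ((if p' l = i then 1 else 0) + (if q' l = i then 1 else 0)))"
        using B i by (blast, blast)
      have m2: "a2 m = a0" "p2 m = p" "q2 m = q" by (simp_all add: a2_def p2_def q2_def)
      have cc: "c i = c' i + a0 * ((if p = i then 1 else 0) - (if q = i then 1 else 0))"
        using pq by (cases "i = p"; cases "i = q") (simp_all add: c'_def)
      have ca: "\<bar>c i\<bar> = \<bar>c' i\<bar> + a0 * ((if p = i then 1 else 0) + (if q = i then 1 else 0))"
        using pq c'p c'q p q a0 by (cases "i = p"; cases "i = q") (simp_all add: c'_def)
      show "c i = (\<Sum>l<Suc m. a2 l * ((if p2 l = i then 1 else 0) - (if q2 l = i then 1 else 0)))"
        unfolding sum.lessThan_Suc m2 e1 using cc Bi(1) by simp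
      show "\<bar>c i\<bar> = (\<Sum>l<Suc m. a2 l * ((if p2 l = i then 1 else 0) + (if q2 l = i then 1 else 0)))"
        unfolding sum.lessThan_Suc m2 e2 using ca Bi(2) by simp
    qed
    show ?thesis using G1 G2 G3 by blast
  qed
qed

lemma nadic_disj:
  assumes "n > 0" "a \<noteq> b"
  shows "nadic_int n K a \<inter> nadic_int n K b = {}"
proof -
  have pos: "real n ^ K > 0" using assms by simp
  have *: "nadic_int n K a \<inter> nadic_int n K b = {}" if "a < b" for a b
  proof -
    have "real (Suc a) \<le> real b" using that by simp
    hence "real (Suc a) / real n ^ K \<le> real b / real n ^ K"
      using pos by (simp add: divide_right_mono)
    thus ?thesis by (auto simp: nadic_int_def)
  qed
  show ?thesis using assms(2) *[of a b] *[of b a] by (cases "a < b") (auto simp: Int_commute)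
qed

lemma child_sub:
  assumes "n > 0" "i < n"
  shows "nadic_child n k j i \<subseteq> nadic_int n k j"
proof -
  have pos: "real n ^ k > 0" using assms by simp
  have e1: "real j / real n ^ k = real (n*j) / real n ^ Suc k" using assms by simp
  have e2: "real (Suc j) / real n ^ k = real (n*j+n) / real n ^ Suc k" using assms
    by (simp add: field_simps)
  have "real (n*j) / real n ^ Suc k \<le> real (n*j+i) / real n ^ Suc k"
    using pos by (intro divide_right_mono) auto
  moreover have "real (Suc (n*j+i)) / real n ^ Suc k \<le> real (n*j+n) / real n ^ Suc k"
    using pos assms by (intro divide_right_mono) auto
  ultimately show ?thesis unfolding nadic_child_def nadic_int_def e1 e2 by auto
qed

lemma child_cover:
  assumes "n > 0" "x \<in> nadic_int n k j"
  shows "\<exists>i<n. x \<in> nadic_child n k j i"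
proof -
  define N where "N = real n ^ Suc k"
  have N: "N > 0" using assms by (simp add: N_def)
  have e1: "real j / real n ^ k = real (n*j) / N" using assms by (simp add: N_def)
  have e2: "real (Suc j) / real n ^ k = real (n*j+n) / N" using assms
    by (simp add: field_simps N_def)
  have x: "real (n*j) / N \<le> x" "x < real (n*j+n) / N"
    using assms(2) unfolding nadic_int_def e1 e2 by auto
  define y where "y = x * N"
  have y: "real (n*j) \<le> y" "y < real (n*j+n)"
    using x N by (auto simp: y_def field_simps)
  define t where "t = nat \<lfloor>y\<rfloor>"
  have fl: "int (n*j) \<le> \<lfloor>y\<rfloor>" using y(1) by (subst le_floor_iff) simp
  hence it: "int t = \<lfloor>y\<rfloor>" unfolding t_def by linarith
  hence t1: "n*j \<le> t" using fl by linarith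
  have ty: "real t = of_int \<lfloor>y\<rfloor>" using it by (metis of_int_of_nat_eq)
  have "real t < real (n*j+n)" using ty y(2) of_int_floor_le[of y] by linarith
  hence t2: "t < n*j+n" by (simp only: of_nat_less_iff)
  have "real t \<le> y" "y < real t + 1" using ty of_int_floor_le[of y] real_of_int_floor_add_one_gt[of y] by linarith+
  hence "real t / N \<le> x" "x < real (Suc t) / N" using N by (auto simp: y_def field_simps)
  moreover have "n * j + (t - n*j) = t" using t1 by simp
  moreover have "t - n*j < n" using t1 t2 by simp
  ultimately show ?thesis unfolding nadic_child_def nadic_int_def N_def
    by (intro exI[of _ "t - n*j"]) simp
qed

lemma indicator_Ico_integral:
  fixes a b :: real
  assumes "a \<le> b" "{a..<b} \<subseteq> S"
  shows "(indicator {a..<b} has_integral (b - a)) S"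
proof -
  have "((\<lambda>x. 1::real) has_integral (b - a)) {a..b}"
    using has_integral_const_real[of "1::real" a b] assms by (simp add: real_scaleR_def)
  hence "((\<lambda>x. 1::real) has_integral (b - a)) {a..<b}"
    by (rule has_integral_spike_set_eq[THEN iffD1, rotated -1])
       (auto intro: negligible_subset[of "{b}"])
  hence "((\<lambda>x. if x \<in> {a..<b} then 1 else 0) has_integral (b - a)) S"
    using has_integral_restrict[OF assms(2), of "\<lambda>x. 1::real"] by (simp del: atLeastLessThan_iff)
  moreover have "indicator {a..<b} = (\<lambda>x. if x \<in> {a..<b} then 1 else (0::real))"
    by (auto simp: indicator_def)
  ultimately show ?thesis by simp
qed

lemma child_integral:
  assumes "n > 0" "i < n"
  shows "(indicator (nadic_child n k j i) has_integral (1 / real n ^ Suc k)) (nadic_int n k j)"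
proof -
  have pos: "real n ^ Suc k > 0" using assms by simp
  have "(indicator (nadic_child n k j i) has_integral
     (real (Suc (n*j+i)) / real n ^ Suc k - real (n*j+i) / real n ^ Suc k)) (nadic_int n k j)"
    unfolding nadic_child_def nadic_int_def
    by (rule indicator_Ico_integral)
       (use pos child_sub[OF assms, of k j] in \<open>auto simp: nadic_child_def nadic_int_def divide_right_mono\<close>)
  moreover have "real (Suc (n*j+i)) / real n ^ Suc k - real (n*j+i) / real n ^ Suc k = 1 / real n ^ Suc k"
    by (simp add: diff_divide_distrib[symmetric])
  ultimately show ?thesis by simp
qed

lemma child_ind:
  assumes "n > 0" "i0 < n" "x \<in> nadic_child n k j i0"
  shows "indicator (nadic_child n k j i) x = (if i = i0 then 1 else (0::real))"
  using assms nadic_disj[OF assms(1), of "n*j+i" "n*j+i0" "Suc k"]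
  by (auto simp: nadic_child_def indicator_def)

theorem lemma6p4:
  fixes n k j :: nat and h :: "real \<Rightarrow> real"
  assumes "n \<ge> 2" and "j < n ^ k" and "haar_on n k j h"
  shows "\<exists>m\<le>n. \<exists>hs :: nat \<Rightarrow> real \<Rightarrow> real.
           (\<forall>l<m. elementary_haar_on n k j (hs l)) \<and>
           (\<forall>x. h x = (\<Sum>l<m. hs l x)) \<and>
           (\<forall>x. \<bar>h x\<bar> = (\<Sum>l<m. \<bar>hs l x\<bar>))"
proof -
  have n0: "n > 0" using assms(1) by simp
  define ch where "ch i = nadic_child n k j i" for i
  define I where "I = nadic_int n k j"
  define L :: real where "L = 1 / real n ^ Suc k"
  have L: "L > 0" using n0 by (simp add: L_def)
  have out: "\<And>x. x \<notin> I \<Longrightarrow> h x = 0" and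
    const: "\<forall>i<n. \<exists>c. \<forall>x\<in>ch i. h x = c" and int0: "(h has_integral 0) I"
    using assms(3) by (auto simp: haar_on_def I_def ch_def)
  from const obtain c where c: "\<And>i x. i < n \<Longrightarrow> x \<in> ch i \<Longrightarrow> h x = c i" by metis
  have sub: "\<And>i. i < n \<Longrightarrow> ch i \<subseteq> I" using child_sub[OF n0] by (simp add: ch_def I_def)
  have cover: "\<And>x. x \<in> I \<Longrightarrow> \<exists>i<n. x \<in> ch i" using child_cover[OF n0] by (simp add: ch_def I_def)
  have ind: "\<And>i i0 x. i0 < n \<Longrightarrow> x \<in> ch i0 \<Longrightarrow> indicator (ch i) x = (if i = i0 then 1 else (0::real))"
    using child_ind[OF n0] by (simp add: ch_def)
  have cint: "\<And>i. i < n \<Longrightarrow> (indicator (ch i) has_integral L) I"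
    using child_integral[OF n0] by (simp add: ch_def I_def L_def)
  have indout: "\<And>i x. i < n \<Longrightarrow> x \<notin> I \<Longrightarrow> indicator (ch i) x = (0::real)"
    using sub by (auto simp: indicator_def)
  have hrep: "h x = (\<Sum>i<n. c i * indicator (ch i) x)" for x
  proof (cases "x \<in> I")
    case True
    then obtain i0 where i0: "i0 < n" "x \<in> ch i0" using cover by blast
    have "(\<Sum>i<n. c i * indicator (ch i) x) = (\<Sum>i<n. if i = i0 then c i else 0)"
      by (rule sum.cong) (simp_all add: ind[OF i0])
    also have "\<dots> = c i0" using i0 by (simp add: sum.delta)
    finally show ?thesis using c i0 by simp
  next
    case False
    thus ?thesis using out indout by simp
  qed
  have "((\<lambda>x. \<Sum>i<n. c i * indicator (ch i) x) has_integral (\<Sum>i<n. c i * L)) I"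
    by (rule has_integral_sum) (auto intro: has_integral_mult_right cint)
  moreover have "(\<lambda>x. \<Sum>i<n. c i * indicator (ch i) x) = h" using hrep by (rule ext[OF sym])
  ultimately have "(h has_integral (\<Sum>i<n. c i * L)) I" by simp
  hence "(\<Sum>i<n. c i * L) = 0" using int0 has_integral_unique by blast
  hence csum: "(\<Sum>i<n. c i) = 0" using L by (simp add: sum_distrib_right[symmetric])
  from comb[OF csum] obtain m a p q where
    m: "m \<le> card {i. i<n \<and> c i \<noteq> 0}" and
    A: "\<forall>l<m. p l < n \<and> q l < n \<and> p l \<noteq> q l \<and> a l \<ge> 0" and
    B: "\<forall>i<n. c i = (\<Sum>l<m. a l * ((if p l = i then 1 else 0) - (if q l = i then 1 else 0))) \<and>
             \<bar>c i\<bar> = (\<Sum>l<m. a l * ((if p l = i then 1 else 0) + (if q l = i then 1 else 0)))"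
    by blast
  have mn: "m \<le> n"
  proof -
    have "card {i. i<n \<and> c i \<noteq> 0} \<le> card {..<n}" by (rule card_mono) auto
    thus ?thesis using m by simp
  qed
  define hs where "hs l = (\<lambda>x. a l * (indicator (ch (p l)) x - indicator (ch (q l)) x))" for l
  have hsin: "hs l x = a l * ((if p l = i0 then 1 else 0) - (if q l = i0 then 1 else 0))"
    if "i0 < n" "x \<in> ch i0" for l i0 x
    using ind[OF that] by (simp add: hs_def)
  have hsout: "hs l x = 0" if "l < m" "x \<notin> I" for l x
    using indout that A by (simp add: hs_def)
  show ?thesis
  proof (intro exI[of _ m] exI[of _ hs] conjI allI impI mn)
    fix l assume l: "l < m"
    have Al: "p l < n" "q l < n" "p l \<noteq> q l" "a l \<ge> 0" using A l by auto
    have "haar_on n k j (hs l)"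
      unfolding haar_on_def
    proof (intro conjI allI impI)
      fix x assume "x \<notin> nadic_int n k j"
      thus "hs l x = 0" using hsout[OF l] by (simp add: I_def)
    next
      fix i assume "i < n"
      thus "\<exists>c. \<forall>x\<in>nadic_child n k j i. hs l x = c"
        using hsin by (auto simp: ch_def)
    next
      have "(hs l has_integral (a l * (L - L))) I"
        unfolding hs_def
        by (intro has_integral_mult_right has_integral_diff cint Al)
      thus "(hs l has_integral 0) (nadic_int n k j)" by (simp add: I_def)
    qed
    moreover have "\<exists>i1<n. \<exists>i2<n. \<exists>c::real.
        hs l = (\<lambda>x. c * (indicator (nadic_child n k j i1) x - indicator (nadic_child n k j i2) x))"
      using Al by (auto simp: hs_def ch_def)
    ultimately show "elementary_haar_on n k j (hs l)" by (simp add: elementary_haar_on_def)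
  next
    fix x
    show "h x = (\<Sum>l<m. hs l x)"
    proof (cases "x \<in> I")
      case True
      then obtain i0 where i0: "i0 < n" "x \<in> ch i0" using cover by blast
      show ?thesis using B i0 c[OF i0] hsin[OF i0] by simp
    next
      case False
      thus ?thesis using out hsout by simp
    qed
  next
    fix x
    show "\<bar>h x\<bar> = (\<Sum>l<m. \<bar>hs l x\<bar>)"
    proof (cases "x \<in> I")
      case True
      then obtain i0 where i0: "i0 < n" "x \<in> ch i0" using cover by blast
      have "\<bar>hs l x\<bar> = a l * ((if p l = i0 then 1 else 0) + (if q l = i0 then 1 else 0))" if "l < m" for l
        using A that hsin[OF i0, of l] by (auto simp: abs_mult)
      hence "(\<Sum>l<m. \<bar>hs l x\<bar>) = (\<Sum>l<m. a l * ((if p l = i0 then 1 else 0) + (if q l = i0 then 1 else 0)))"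
        by (intro sum.cong) auto
      moreover have "\<bar>c i0\<bar> = (\<Sum>l<m. a l * ((if p l = i0 then 1 else 0) + (if q l = i0 then 1 else 0)))"
        using B i0(1) by blast
      ultimately show ?thesis using c[OF i0] by simp
    next
      case False
      thus ?thesis using out hsout by simp
    qed
  qed
qed

end
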